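(* Let $\mathcal{S}=\{W_1,\dots,W_M\}\subset\mathbb{U}_N$ with $M\ge2$ and define $\delta$ by $\max_{1\le i<j\le M}|\mathrm{tr}(W_i^\dagger W_j)|=N(1-\delta)$, and assume $\delta>0$. Then for every $\epsilon>0$, $\mathcal{S}$ can be $\epsilon$-tested with query complexity $O\big(\frac{\log M}{\min\{\epsilon^2,\delta\}}\big)$, the implied constant being absolute.
   Context: $\mathbb{U}_N$ is the set of $N\times N$ unitaries. $\|A\|=\sqrt{\mathrm{tr}(A^\dagger A)}$; $D(A,B)=\min_{\theta\in[0,2\pi)}\frac{1}{\sqrt{2N}}\|e^{i\theta}A-B\|$; $D(A,\mathcal{S})=\inf_{B\in\mathcal{S}}D(A,B)$. For $\mathcal{S}\subseteq\mathbb{U}_N$, $U$ has property $\mathcal{S}$ if $U=e^{i\theta}V$ for some $V\in\mathcal{S}$, real $\theta$; $U$ is $\epsilon$-far from $\mathcal{S}$ if $D(U,V)\ge\epsilon$ for all $V\in\mathcal{S}$. Testing model: the unknown $U\in\mathbb{U}_N$ is a black box; the algorithm may prepare arbitrary states on the system plus an ancilla, apply $U\otimes I$ (one query each), interleaved with arbitrary fixed quantum operations, and measure. It $\epsilon$-tests $\mathcal{S}$ if for every $U\in\mathbb{U}_N$ it accepts with probability $\ge2/3$ when $U$ has property $\mathcal{S}$ and with probability $\le1/3$ when $U$ is $\epsilon$-far from $\mathcal{S}$; the query complexity is the number of queries. *)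

theory Defs
  imports "Jordan_Normal_Form.Schur_Decomposition"
begin

definition mtrace :: "complex mat \<Rightarrow> complex" where
  "mtrace A = (\<Sum>i<dim_row A. A $$ (i, i))"

definition unitary_mat :: "nat \<Rightarrow> complex mat \<Rightarrow> bool" where
  "unitary_mat N U \<longleftrightarrow> U \<in> carrier_mat N N \<and> mat_adjoint U * U = 1\<^sub>m N"

definition hs_norm :: "complex mat \<Rightarrow> real" where
  "hs_norm A = sqrt (Re (mtrace (mat_adjoint A * A)))"

definition phase_dist :: "nat \<Rightarrow> complex mat \<Rightarrow> complex mat \<Rightarrow> real" where
  "phase_dist N A B =
     (INF \<theta>\<in>{0..<2*pi}. hs_norm (exp (\<i> * complex_of_real \<theta>) \<cdot>\<^sub>m A - B) / sqrt (2 * real N))"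

definition has_property :: "complex mat set \<Rightarrow> complex mat \<Rightarrow> bool" where
  "has_property S U \<longleftrightarrow> (\<exists>\<theta>::real. \<exists>V\<in>S. U = exp (\<i> * complex_of_real \<theta>) \<cdot>\<^sub>m V)"

definition eps_far :: "nat \<Rightarrow> real \<Rightarrow> complex mat set \<Rightarrow> complex mat \<Rightarrow> bool" where
  "eps_far N \<epsilon> S U \<longleftrightarrow> (\<forall>V\<in>S. phase_dist N U V \<ge> \<epsilon>)"

definition vdot :: "complex vec \<Rightarrow> complex vec \<Rightarrow> complex" where
  "vdot u v = (\<Sum>i<dim_vec v. cnj (u $ i) * v $ i)"

text \<open>U \<otimes> I_K on C^N \<otimes> C^K, system index a and ancilla index b combined as a*K+b.\<close>
definition kron_id :: "nat \<Rightarrow> complex mat \<Rightarrow> complex mat" where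
  "kron_id K U = mat (dim_row U * K) (dim_col U * K)
     (\<lambda>(i, j). if i mod K = j mod K then U $$ (i div K, j div K) else 0)"

text \<open>Final state of the algorithm: V_q (U\<otimes>I) ... V_1 (U\<otimes>I) V_0 psi, with q = length Vs.\<close>
definition final_state :: "complex mat \<Rightarrow> nat \<Rightarrow> complex vec \<Rightarrow> complex mat \<Rightarrow> complex mat list \<Rightarrow> complex vec" where
  "final_state U K \<psi> V0 Vs = foldl (\<lambda>\<phi> V. V *\<^sub>v (kron_id K U *\<^sub>v \<phi>)) (V0 *\<^sub>v \<psi>) Vs"

text \<open>Two-outcome measurement: accepting POVM effect E, 0 \<le> E \<le> I.\<close>
definition is_effect :: "nat \<Rightarrow> complex mat \<Rightarrow> bool" where
  "is_effect n E \<longleftrightarrow> E \<in> carrier_mat n n \<and> mat_adjoint E = E \<and>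
     (\<forall>x\<in>carrier_vec n. 0 \<le> Re (vdot x (E *\<^sub>v x)) \<and> Re (vdot x (E *\<^sub>v x)) \<le> Re (vdot x x))"

definition accept_prob :: "complex mat \<Rightarrow> nat \<Rightarrow> complex vec \<Rightarrow> complex mat \<Rightarrow> complex mat list \<Rightarrow> complex mat \<Rightarrow> real" where
  "accept_prob U K \<psi> V0 Vs E = (let \<phi> = final_state U K \<psi> V0 Vs in Re (vdot \<phi> (E *\<^sub>v \<phi>)))"

definition valid_alg :: "nat \<Rightarrow> nat \<Rightarrow> nat \<Rightarrow> complex vec \<Rightarrow> complex mat \<Rightarrow> complex mat list \<Rightarrow> complex mat \<Rightarrow> bool" where
  "valid_alg N q K \<psi> V0 Vs E \<longleftrightarrow>
     K \<ge> 1 \<and> \<psi> \<in> carrier_vec (N * K) \<and> vdot \<psi> \<psi> = 1 \<and>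
     unitary_mat (N * K) V0 \<and> length Vs = q \<and> (\<forall>V\<in>set Vs. unitary_mat (N * K) V) \<and>
     is_effect (N * K) E"

definition eps_tests :: "nat \<Rightarrow> complex mat set \<Rightarrow> real \<Rightarrow> nat \<Rightarrow> bool" where
  "eps_tests N S \<epsilon> q \<longleftrightarrow>
     (\<exists>K \<psi> V0 Vs E. valid_alg N q K \<psi> V0 Vs E \<and>
        (\<forall>U. unitary_mat N U \<longrightarrow>
           (has_property S U \<longrightarrow> accept_prob U K \<psi> V0 Vs E \<ge> 2/3) \<and>
           (eps_far N \<epsilon> S U \<longrightarrow> accept_prob U K \<psi> V0 Vs E \<le> 1/3)))"

end

theory Submission
  imports Defs
begin


lemma mat_adjoint_alt: "mat_adjoint A = mat (dim_col A) (dim_row A) (\<lambda>(i,j). cnj (A $$ (j,i)))"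
  by (rule eq_matI) (auto simp: mat_adjoint_def mat_of_rows_def)

lemma sum_divmod: fixes A B :: nat shows "(\<Sum>n<A*B. f n) = (\<Sum>i<A. \<Sum>j<B. f (i*B+j))"
proof (induction A)
  case 0 then show ?case by simp
next
  case (Suc A)
  have "(\<Sum>n<Suc A * B. f n) = (\<Sum>n<A*B + B. f n)" by (simp add: add.commute)
  also have "\<dots> = (\<Sum>n<A*B. f n) + (\<Sum>n=A*B..<A*B+B. f n)"
    using sum.atLeastLessThan_concat[of 0 "A*B" "A*B+B" f] by (simp add: atLeast0LessThan)
  also have "(\<Sum>n=A*B..<A*B+B. f n) = (\<Sum>j<B. f (A*B+j))"
    using sum.shift_bounds_nat_ivl[of f 0 "A*B" B] by (simp add: atLeast0LessThan add.commute)
  finally show ?case using Suc by simp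
qed

definition vtens :: "complex vec \<Rightarrow> complex vec \<Rightarrow> complex vec" where
  "vtens x y = vec (dim_vec x * dim_vec y) (\<lambda>n. x $ (n div dim_vec y) * y $ (n mod dim_vec y))"

lemma dim_vtens[simp]: "dim_vec (vtens x y) = dim_vec x * dim_vec y"
  by (simp add: vtens_def)

lemma divmod_idx: fixes i j B :: nat assumes "j < B" shows "(i*B+j) div B = i" "(i*B+j) mod B = j"
  using assms by (auto simp: add.commute[of "i*B"])

lemma idx_lt: fixes i j A B :: nat shows "i < A \<Longrightarrow> j < B \<Longrightarrow> i * B + j < A * B"
proof -
  assume a: "i < A" "j < B"
  have "i * B + j < (i+1)*B" using a by simp
  also have "\<dots> \<le> A * B" using a by (intro mult_right_mono) auto
  finally show ?thesis .
qed

lemma vtens_idx: "i < dim_vec x \<Longrightarrow> j < dim_vec y \<Longrightarrow> vtens x y $ (i * dim_vec y + j) = x $ i * y $ j"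
proof -
  assume a: "i < dim_vec x" "j < dim_vec y"
  have "(i * dim_vec y + j) div dim_vec y = i" "(i * dim_vec y + j) mod dim_vec y = j" using a by (simp_all add: divmod_idx)
  then show ?thesis using a by (simp add: vtens_def idx_lt)
qed

lemma vdot_vtens:
  assumes "dim_vec x' = dim_vec x" "dim_vec y' = dim_vec y"
  shows "vdot (vtens x y) (vtens x' y') = vdot x x' * vdot y y'"
proof -
  have "vdot (vtens x y) (vtens x' y') = (\<Sum>i<dim_vec x. \<Sum>j<dim_vec y. cnj (x $ i * y $ j) * (x' $ i * y' $ j))"
    unfolding vdot_def using assms vtens_idx[of _ x' _ y'] by (simp add: sum_divmod vtens_idx)
  also have "\<dots> = (\<Sum>i<dim_vec x. \<Sum>j<dim_vec y. (cnj (x $ i) * x' $ i) * (cnj (y $ j) * y' $ j))"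
    by (simp add: mult_ac)
  also have "\<dots> = vdot x x' * vdot y y'"
    unfolding vdot_def using assms by (simp add: sum_distrib_left sum_distrib_right sum.swap[of _ "{..<dim_vec y}"])
  finally show ?thesis .
qed

lemma vec_eq_divmod:
  assumes "dim_vec v = A * B" "dim_vec w = A * B"
    and "\<And>i j. i < A \<Longrightarrow> j < B \<Longrightarrow> v $ (i*B+j) = w $ (i*B+j)"
  shows "v = w"
proof (rule eq_vecI)
  show "dim_vec v = dim_vec w" using assms by simp
  fix n assume n: "n < dim_vec w"
  then have B: "B > 0" using assms by (cases "B = 0") auto
  have "n div B < A" using n assms by (simp add: less_mult_imp_div_less)
  moreover have "n mod B < B" using B by simp
  moreover have "n = (n div B) * B + n mod B" by simp
  ultimately show "v $ n = w $ n" using assms(3) by metis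
qed

lemma sum_if_delta: fixes w :: "nat \<Rightarrow> complex"
  shows "k < K \<Longrightarrow> (\<Sum>r<K. (if k = r then u else 0) * w r) = u * w k"
proof -
  assume "k < K"
  have "(\<Sum>r<K. (if k = r then u else 0) * w r) = (\<Sum>r<K. if k = r then u * w r else 0)"
    by (intro sum.cong) auto
  then show ?thesis using \<open>k < K\<close> by (simp add: sum.delta)
qed

lemma kron_mult:
  assumes U: "U \<in> carrier_mat N N" and v: "dim_vec v = N * K" and n: "n < N * K"
  shows "(kron_id K U *\<^sub>v v) $ n = (\<Sum>b<N. U $$ (n div K, b) * v $ (b*K + n mod K))"
proof -
  have K: "K > 0" using n by (cases "K = 0") auto
  have "(kron_id K U *\<^sub>v v) $ n = (\<Sum>m<N*K. (if n mod K = m mod K then U $$ (n div K, m div K) else 0) * v $ m)"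
    using U v n by (simp add: kron_id_def scalar_prod_def atLeast0LessThan)
  also have "\<dots> = (\<Sum>b<N. \<Sum>r<K. (if n mod K = r then U $$ (n div K, b) else 0) * v $ (b*K+r))"
    unfolding sum_divmod by (intro sum.cong refl) (simp add: divmod_idx)
  also have "\<dots> = (\<Sum>b<N. U $$ (n div K, b) * v $ (b*K + n mod K))"
    using K by (intro sum.cong refl) (simp add: sum_if_delta)
  finally show ?thesis .
qed

lemma kron_vtens:
  assumes U: "U \<in> carrier_mat N N" and x: "dim_vec x = N * N" and y: "dim_vec y = L"
  shows "kron_id (N*L) U *\<^sub>v vtens x y = vtens (kron_id N U *\<^sub>v x) y"
proof (rule vec_eq_divmod[of _ "N*N" L])
  show "dim_vec (kron_id (N * L) U *\<^sub>v vtens x y) = N * N * L" using U by (simp add: kron_id_def)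
  show "dim_vec (vtens (kron_id N U *\<^sub>v x) y) = N * N * L" using U y by (simp add: kron_id_def)
  fix i j assume i: "i < N*N" and j: "j < L"
  obtain a c where ac: "a < N" "c < N" "i = a*N+c"
    using i by (metis divmod_idx mod_less_divisor mult_eq_0_iff less_mult_imp_div_less nat_neq_iff not_less0 div_mult_mod_eq)
  have NL: "c*L + j < N*L" using ac j idx_lt by blast
  have e: "i * L + j = a * (N*L) + (c*L+j)" using ac by (simp add: algebra_simps)
  have "(kron_id (N * L) U *\<^sub>v vtens x y) $ (i * L + j) = (\<Sum>b<N. U $$ (a, b) * vtens x y $ (b*(N*L) + (c*L+j)))"
    unfolding e using U x y NL ac by (subst kron_mult[of _ N]) (auto simp: divmod_idx idx_lt)
  also have "\<dots> = (\<Sum>b<N. U $$ (a, b) * (x $ (b*N+c) * y $ j))"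
  proof (rule sum.cong)
    fix b assume b: "b \<in> {..<N}"
    have eq: "b*(N*L) + (c*L+j) = (b*N+c)*L + j" by (simp add: algebra_simps)
    have "b*N+c < N*N" using b ac idx_lt by blast
    then show "U $$ (a, b) * vtens x y $ (b*(N*L) + (c*L+j)) = U $$ (a, b) * (x $ (b*N+c) * y $ j)"
      unfolding eq using vtens_idx[of "b*N+c" x j y] j x y by simp
  qed simp
  also have "\<dots> = vtens (kron_id N U *\<^sub>v x) y $ (i * L + j)"
    using vtens_idx[of i "kron_id N U *\<^sub>v x" j y] U x y i j ac kron_mult[of U N x N i]
    by (simp add: kron_id_def divmod_idx sum_distrib_right mult.assoc)
  finally show "(kron_id (N * L) U *\<^sub>v vtens x y) $ (i * L + j) = vtens (kron_id N U *\<^sub>v x) y $ (i * L + j)" .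
qed

lemma vtens_assoc:
  assumes "dim_vec x = A" "dim_vec y = B" "dim_vec z = C"
  shows "vtens (vtens x y) z = vtens x (vtens y z)"
proof (rule vec_eq_divmod[of _ "A*B" C])
  show "dim_vec (vtens (vtens x y) z) = A * B * C" "dim_vec (vtens x (vtens y z)) = A * B * C"
    using assms by auto
  fix i k assume i: "i < A*B" and k: "k < C"
  have B: "B > 0" using i by (cases "B = 0") auto
  define a where "a = i div B"
  define b where "b = i mod B"
  have ab: "a < A" "b < B" "i = a*B+b" using i B by (auto simp: a_def b_def less_mult_imp_div_less)
  have e: "i*C+k = a*(B*C) + (b*C+k)" using ab by (simp add: algebra_simps)
  have bc: "b*C+k < B*C" using ab k idx_lt by blast
  have l: "vtens (vtens x y) z $ (i * C + k) = x $ a * (y $ b * z $ k)"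
    using vtens_idx[of i "vtens x y" k z] vtens_idx[of a x b y] assms ab k i by (simp add: mult.assoc)
  have r: "vtens x (vtens y z) $ (i * C + k) = x $ a * (y $ b * z $ k)"
    unfolding e using vtens_idx[of a x "b*C+k" "vtens y z"] vtens_idx[of b y k z] assms ab k bc by simp
  show "vtens (vtens x y) z $ (i * C + k) = vtens x (vtens y z) $ (i * C + k)" using l r by simp
qed

definition vone :: "complex vec" where "vone = vec 1 (\<lambda>_. 1)"

lemma vtens_vone: "vtens vone y = y"
  by (rule eq_vecI) (auto simp: vtens_def vone_def)

lemma vdot_vone: "vdot vone vone = 1"
  by (simp add: vdot_def vone_def)

definition permmat :: "nat \<Rightarrow> (nat \<Rightarrow> nat) \<Rightarrow> complex mat" where
  "permmat D \<sigma> = mat D D (\<lambda>(n,m). if m = \<sigma> n then 1 else 0)"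

lemma permmat_mult:
  assumes "n < D" "\<sigma> n < D" "dim_vec v = D"
  shows "(permmat D \<sigma> *\<^sub>v v) $ n = v $ (\<sigma> n)"
proof -
  have "(permmat D \<sigma> *\<^sub>v v) $ n = (\<Sum>m<D. (if m = \<sigma> n then 1 else 0) * v $ m)"
    using assms by (simp add: permmat_def scalar_prod_def atLeast0LessThan)
  also have "\<dots> = (\<Sum>m<D. if \<sigma> n = m then v $ m else 0)" by (intro sum.cong) auto
  also have "\<dots> = v $ (\<sigma> n)" using assms by (simp add: sum.delta)
  finally show ?thesis .
qed

lemma permmat_unitary:
  assumes "bij_betw \<sigma> {..<D} {..<D}"
  shows "unitary_mat D (permmat D \<sigma>)"
  unfolding unitary_mat_def
proof
  show "permmat D \<sigma> \<in> carrier_mat D D" by (simp add: permmat_def)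
  show "mat_adjoint (permmat D \<sigma>) * permmat D \<sigma> = 1\<^sub>m D"
  proof (rule eq_matI)
    fix i j assume i: "i < dim_row (1\<^sub>m D)" and j: "j < dim_col (1\<^sub>m D)"
    have "(mat_adjoint (permmat D \<sigma>) * permmat D \<sigma>) $$ (i, j) =
        (\<Sum>k<D. (if i = \<sigma> k then 1 else 0) * (if j = \<sigma> k then 1 else 0))"
      using i j by (simp add: mat_adjoint_alt permmat_def scalar_prod_def atLeast0LessThan)
        (intro sum.cong, auto)
    also have "\<dots> = (\<Sum>m<D. (if i = m then 1 else 0) * (if j = m then 1 else 0))"
      using sum.reindex_bij_betw[OF assms, of "\<lambda>m. (if i = m then 1 else 0) * (if j = m then 1 else (0::complex))"] by simp
    also have "\<dots> = (\<Sum>m<D. if i = m then (if j = m then 1 else 0) else 0)" by (intro sum.cong) auto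
    also have "\<dots> = 1\<^sub>m D $$ (i, j)" using i j by (simp add: sum.delta)
    finally show "(mat_adjoint (permmat D \<sigma>) * permmat D \<sigma>) $$ (i, j) = 1\<^sub>m D $$ (i, j)" .
  qed (auto simp: mat_adjoint_alt permmat_def)
qed

definition swp :: "nat \<Rightarrow> nat \<Rightarrow> nat \<Rightarrow> nat" where
  "swp A B n = (n mod A) * B + n div A"

lemma swp_bij: "bij_betw (swp A B) {..<A*B} {..<A*B}"
proof (rule bij_betw_byWitness[where f'="swp B A"])
  show "\<forall>a\<in>{..<A * B}. swp B A (swp A B a) = a"
  proof
    fix n assume n: "n \<in> {..<A*B}"
    then have "n div A < B" by (simp add: less_mult_imp_div_less mult.commute)
    then show "swp B A (swp A B n) = n" by (simp add: swp_def divmod_idx)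
  qed
  show "\<forall>a'\<in>{..<A * B}. swp A B (swp B A a') = a'"
  proof
    fix n assume n: "n \<in> {..<A*B}"
    then have "n div B < A" by (simp add: less_mult_imp_div_less)
    then show "swp A B (swp B A n) = n" by (simp add: swp_def divmod_idx)
  qed
  show "swp A B ` {..<A * B} \<subseteq> {..<A * B}"
  proof
    fix m assume "m \<in> swp A B ` {..<A * B}"
    then obtain n where n: "n < A*B" "m = swp A B n" by auto
    then have A: "A > 0" by (cases "A = 0") auto
    have "n div A < B" using n by (simp add: less_mult_imp_div_less mult.commute)
    then show "m \<in> {..<A*B}" using n A idx_lt[of "n mod A" A "n div A" B] by (simp add: swp_def)
  qed
  show "swp B A ` {..<A * B} \<subseteq> {..<A * B}"
  proof
    fix m assume "m \<in> swp B A ` {..<A * B}"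
    then obtain n where n: "n < A*B" "m = swp B A n" by auto
    then have B: "B > 0" by (cases "B = 0") auto
    have "n div B < A" using n by (simp add: less_mult_imp_div_less)
    then show "m \<in> {..<A*B}" using n B idx_lt[of "n mod B" B "n div B" A] by (simp add: swp_def mult.commute)
  qed
qed

lemma swap_vtens:
  assumes x: "dim_vec x = A" and y: "dim_vec y = B"
  shows "permmat (A*B) (swp A B) *\<^sub>v vtens x y = vtens y x"
proof (rule vec_eq_divmod[of _ B A])
  show "dim_vec (permmat (A * B) (swp A B) *\<^sub>v vtens x y) = B * A" by (simp add: permmat_def)
  show "dim_vec (vtens y x) = B * A" using x y by simp
  fix j i assume j: "j < B" and i: "i < A"
  have s: "swp A B (j*A+i) = i*B+j" using i by (simp add: swp_def divmod_idx)
  have lt: "j*A+i < A*B" using idx_lt[OF j i] by (simp add: mult.commute)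
  show "(permmat (A * B) (swp A B) *\<^sub>v vtens x y) $ (j * A + i) = vtens y x $ (j * A + i)"
    using permmat_mult[of "j*A+i" "A*B" "swp A B" "vtens x y"] s lt idx_lt[OF i j]
      vtens_idx[of i x j y] vtens_idx[of j y i x] x y i j by simp
qed

definition phi :: "nat \<Rightarrow> complex vec" where
  "phi N = vec (N*N) (\<lambda>n. if n div N = n mod N then complex_of_real (1 / sqrt (real N)) else 0)"

definition choi :: "nat \<Rightarrow> complex mat \<Rightarrow> complex vec" where
  "choi N U = kron_id N U *\<^sub>v phi N"

lemma dim_phi[simp]: "dim_vec (phi N) = N * N" by (simp add: phi_def)

lemma dim_choi[simp]: "U \<in> carrier_mat N N \<Longrightarrow> dim_vec (choi N U) = N * N"
  by (simp add: choi_def kron_id_def)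

lemma choi_idx:
  assumes U: "U \<in> carrier_mat N N" and a: "a < N" and c: "c < N"
  shows "choi N U $ (a*N+c) = U $$ (a,c) * complex_of_real (1 / sqrt (real N))"
proof -
  have lt: "a*N+c < N*N" using idx_lt a c by blast
  have "choi N U $ (a*N+c) = (\<Sum>b<N. U $$ (a, b) * phi N $ (b*N + c))"
    unfolding choi_def using kron_mult[OF U _ lt, of "phi N"] c by (simp add: divmod_idx)
  also have "\<dots> = (\<Sum>b<N. if c = b then U $$ (a, b) * complex_of_real (1 / sqrt (real N)) else 0)"
  proof (rule sum.cong)
    fix b assume b: "b \<in> {..<N}"
    have "b*N+c < N*N" using idx_lt b c by blast
    then show "U $$ (a, b) * phi N $ (b*N + c) = (if c = b then U $$ (a, b) * complex_of_real (1 / sqrt (real N)) else 0)"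
      using c by (auto simp: phi_def divmod_idx)
  qed simp
  also have "\<dots> = U $$ (a,c) * complex_of_real (1 / sqrt (real N))" using c by (simp add: sum.delta)
  finally show ?thesis .
qed

lemma mtrace_adj:
  assumes W: "W \<in> carrier_mat N N" and U: "U \<in> carrier_mat N N"
  shows "mtrace (mat_adjoint W * U) = (\<Sum>a<N. \<Sum>c<N. cnj (W $$ (a,c)) * U $$ (a,c))"
proof -
  have "mtrace (mat_adjoint W * U) = (\<Sum>i<N. \<Sum>k<N. cnj (W $$ (k,i)) * U $$ (k,i))"
    unfolding mtrace_def using W U
    by (simp add: mat_adjoint_alt scalar_prod_def atLeast0LessThan)
  also have "\<dots> = (\<Sum>a<N. \<Sum>c<N. cnj (W $$ (a,c)) * U $$ (a,c))" by (rule sum.swap)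
  finally show ?thesis .
qed

lemma vdot_choi:
  assumes W: "W \<in> carrier_mat N N" and U: "U \<in> carrier_mat N N" and N: "N \<ge> 1"
  shows "vdot (choi N W) (choi N U) = mtrace (mat_adjoint W * U) / of_nat N"
proof -
  let ?s = "complex_of_real (1 / sqrt (real N))"
  have ss: "cnj ?s * ?s = 1 / of_nat N"
  proof -
    have "cnj ?s * ?s = complex_of_real (1 / sqrt (real N) * (1 / sqrt (real N)))"
      by (simp only: of_real_mult complex_cnj_complex_of_real)
    also have "1 / sqrt (real N) * (1 / sqrt (real N)) = 1 / real N" using N
      by (simp add: real_sqrt_mult[symmetric])
    finally have "cnj ?s * ?s = complex_of_real (1 / real N)" .
    then show ?thesis by (metis of_real_divide of_real_1 of_real_of_nat_eq)
  qed
  have "vdot (choi N W) (choi N U) = (\<Sum>a<N. \<Sum>c<N. cnj (W $$ (a,c) * ?s) * (U $$ (a,c) * ?s))"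
    unfolding vdot_def using W U by (simp add: sum_divmod choi_idx)
  also have "\<dots> = (\<Sum>a<N. \<Sum>c<N. (cnj (W $$ (a,c)) * U $$ (a,c)) * (cnj ?s * ?s))"
    by (simp add: mult_ac)
  also have "\<dots> = mtrace (mat_adjoint W * U) / of_nat N"
    unfolding ss mtrace_adj[OF W U] by (simp add: sum_divide_distrib)
  finally show ?thesis .
qed

lemma vdot_cnj: "dim_vec u = dim_vec v \<Longrightarrow> vdot v u = cnj (vdot u v)"
  by (simp add: vdot_def mult.commute)

lemma vdot_self_real: "vdot x x = complex_of_real (\<Sum>i<dim_vec x. (cmod (x $ i))^2)"
  unfolding vdot_def of_real_sum complex_norm_square by (simp add: mult.commute)

lemma vdot_self_nonneg: "0 \<le> Re (vdot x x)"
  by (simp add: vdot_self_real sum_nonneg)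

definition effmat :: "nat \<Rightarrow> nat \<Rightarrow> (nat \<Rightarrow> complex vec) \<Rightarrow> complex mat" where
  "effmat D M \<phi> = mat D D (\<lambda>(a,b). (2/3) * (\<Sum>i<M. \<phi> i $ a * cnj (\<phi> i $ b)))"

lemma effmat_quad:
  assumes x: "dim_vec x = D" and \<phi>: "\<And>i. i < M \<Longrightarrow> dim_vec (\<phi> i) = D"
  shows "vdot x (effmat D M \<phi> *\<^sub>v x) = complex_of_real ((2/3) * (\<Sum>i<M. (cmod (vdot (\<phi> i) x))^2))"
proof -
  have "vdot x (effmat D M \<phi> *\<^sub>v x) =
      (\<Sum>a<D. cnj (x $ a) * (\<Sum>b<D. (2/3) * (\<Sum>i<M. \<phi> i $ a * cnj (\<phi> i $ b)) * x $ b))"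
    unfolding vdot_def effmat_def using x by (simp add: scalar_prod_def atLeast0LessThan)
  also have "\<dots> = (2/3) * (\<Sum>a<D. \<Sum>b<D. \<Sum>i<M. (cnj (x $ a) * \<phi> i $ a) * (cnj (\<phi> i $ b) * x $ b))"
    by (simp add: sum_distrib_left sum_distrib_right mult_ac)
  also have "(\<Sum>a<D. \<Sum>b<D. \<Sum>i<M. (cnj (x $ a) * \<phi> i $ a) * (cnj (\<phi> i $ b) * x $ b))
      = (\<Sum>a<D. \<Sum>i<M. \<Sum>b<D. (cnj (x $ a) * \<phi> i $ a) * (cnj (\<phi> i $ b) * x $ b))"
    by (rule sum.cong[OF refl], rule sum.swap)
  also have "\<dots> = (\<Sum>i<M. \<Sum>a<D. \<Sum>b<D. (cnj (x $ a) * \<phi> i $ a) * (cnj (\<phi> i $ b) * x $ b))"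
    by (rule sum.swap)
  also have "\<dots> = (\<Sum>i<M. cnj (vdot (\<phi> i) x) * vdot (\<phi> i) x)"
  proof (rule sum.cong)
    fix i assume i: "i \<in> {..<M}"
    have "cnj (vdot (\<phi> i) x) = (\<Sum>a<D. cnj (x $ a) * \<phi> i $ a)"
      unfolding vdot_def using x by (simp add: mult.commute)
    moreover have "vdot (\<phi> i) x = (\<Sum>b<D. cnj (\<phi> i $ b) * x $ b)" unfolding vdot_def using x by simp
    ultimately show "(\<Sum>a<D. \<Sum>b<D. (cnj (x $ a) * \<phi> i $ a) * (cnj (\<phi> i $ b) * x $ b)) =
        cnj (vdot (\<phi> i) x) * vdot (\<phi> i) x" by (simp add: sum_product)
  qed simp
  also have "\<dots> = (\<Sum>i<M. complex_of_real ((cmod (vdot (\<phi> i) x))^2))"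
    unfolding complex_norm_square by (simp add: mult.commute)
  finally show ?thesis by (simp add: of_real_sum)
qed

lemma sum_abs_prod_le:
  fixes f :: "nat \<Rightarrow> real"
  shows "(\<Sum>i<M. \<Sum>j<M. f i * f j) \<le> real M * (\<Sum>i<M. (f i)^2)"
proof -
  have "(\<Sum>i<M. \<Sum>j<M. f i * f j) \<le> (\<Sum>i<M. \<Sum>j<M. ((f i)^2 + (f j)^2) / 2)"
  proof (intro sum_mono)
    fix i j
    have "0 \<le> (f i - f j)^2" by simp
    then show "f i * f j \<le> ((f i)^2 + (f j)^2) / 2" by (simp add: power2_eq_square algebra_simps)
  qed
  also have "\<dots> = real M * (\<Sum>i<M. (f i)^2)"
    apply (simp add: sum_divide_distrib[symmetric] sum.distrib add_divide_distrib sum.swap[of "\<lambda>i j. (f j)^2"])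
    apply (simp add: sum_distrib_left[symmetric])
    done
  finally show ?thesis .
qed

lemma effmat_bound:
  assumes x: "dim_vec x = D" and \<phi>: "\<And>i. i < M \<Longrightarrow> dim_vec (\<phi> i) = D"
    and norm: "\<And>i. i < M \<Longrightarrow> vdot (\<phi> i) (\<phi> i) = 1"
    and off: "\<And>i j. i < M \<Longrightarrow> j < M \<Longrightarrow> i \<noteq> j \<Longrightarrow> cmod (vdot (\<phi> i) (\<phi> j)) \<le> \<eta>"
    and eta: "0 \<le> \<eta>" "real M * \<eta> \<le> 1/2"
  shows "(\<Sum>i<M. (cmod (vdot (\<phi> i) x))^2) \<le> 3/2 * Re (vdot x x)"
proof -
  define a where "a i = vdot (\<phi> i) x" for i
  define S where "S = (\<Sum>i<M. (cmod (a i))^2)"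
  define y where "y = vec D (\<lambda>b. \<Sum>i<M. a i * \<phi> i $ b)"
  have dy: "dim_vec y = D" by (simp add: y_def)
  have yx: "vdot y x = complex_of_real S"
  proof -
    have "vdot y x = (\<Sum>b<D. \<Sum>i<M. cnj (a i) * (cnj (\<phi> i $ b) * x $ b))"
      unfolding vdot_def y_def using x by (simp add: sum_distrib_right sum_distrib_left mult_ac)
    also have "\<dots> = (\<Sum>i<M. cnj (a i) * a i)"
      unfolding a_def vdot_def using \<phi> x by (simp add: sum.swap[of _ "{..<D}"] sum_distrib_left)
    also have "\<dots> = complex_of_real S"
      unfolding S_def of_real_sum complex_norm_square by (simp add: mult.commute)
    finally show ?thesis .
  qed
  have yy: "vdot y y = (\<Sum>i<M. \<Sum>j<M. cnj (a i) * a j * vdot (\<phi> i) (\<phi> j))"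
  proof -
    have "vdot y y = (\<Sum>b<D. \<Sum>i<M. \<Sum>j<M. cnj (a i) * a j * (cnj (\<phi> i $ b) * \<phi> j $ b))"
      unfolding vdot_def y_def by (simp add: sum_distrib_right sum_distrib_left mult_ac)
    also have "\<dots> = (\<Sum>i<M. \<Sum>b<D. \<Sum>j<M. cnj (a i) * a j * (cnj (\<phi> i $ b) * \<phi> j $ b))"
      by (rule sum.swap)
    also have "\<dots> = (\<Sum>i<M. \<Sum>j<M. \<Sum>b<D. cnj (a i) * a j * (cnj (\<phi> i $ b) * \<phi> j $ b))"
      by (rule sum.cong[OF refl], rule sum.swap)
    also have "\<dots> = (\<Sum>i<M. \<Sum>j<M. cnj (a i) * a j * vdot (\<phi> i) (\<phi> j))"
      unfolding vdot_def using \<phi> by (simp add: sum_distrib_left)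
    finally show ?thesis .
  qed
  have Ryy: "Re (vdot y y) \<le> 3/2 * S"
  proof -
    have "Re (vdot y y) \<le> (\<Sum>i<M. \<Sum>j<M. cmod (cnj (a i) * a j * vdot (\<phi> i) (\<phi> j)))"
      unfolding yy Re_sum by (intro sum_mono complex_Re_le_cmod)
    also have "\<dots> \<le> (\<Sum>i<M. \<Sum>j<M. (if i = j then (cmod (a i))^2 else 0) + \<eta> * (cmod (a i) * cmod (a j)))"
    proof (intro sum_mono)
      fix i j assume i: "i \<in> {..<M}" and j: "j \<in> {..<M}"
      show "cmod (cnj (a i) * a j * vdot (\<phi> i) (\<phi> j)) \<le> (if i = j then (cmod (a i))^2 else 0) + \<eta> * (cmod (a i) * cmod (a j))"
      proof (cases "i = j")
        case True
        then show ?thesis using norm i eta by (simp add: norm_mult power2_eq_square)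
      next
        case False
        have "cmod (vdot (\<phi> i) (\<phi> j)) \<le> \<eta>" using off i j False by simp
        then have "cmod (a i) * cmod (a j) * cmod (vdot (\<phi> i) (\<phi> j)) \<le> cmod (a i) * cmod (a j) * \<eta>"
          by (intro mult_left_mono) auto
        then show ?thesis using False by (simp add: norm_mult mult_ac)
      qed
    qed
    also have "\<dots> = S + \<eta> * (\<Sum>i<M. \<Sum>j<M. cmod (a i) * cmod (a j))"
      unfolding S_def by (simp add: sum.distrib sum_distrib_left sum.delta)
    also have "\<dots> \<le> S + \<eta> * (real M * S)"
      unfolding S_def using eta by (intro add_left_mono mult_left_mono sum_abs_prod_le) auto
    also have "\<dots> \<le> 3/2 * S"
    proof -
      have "S \<ge> 0" unfolding S_def by (simp add: sum_nonneg)
      then have "\<eta> * real M * S \<le> 1/2 * S" using eta by (intro mult_right_mono) (auto simp: mult.commute)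
      then show ?thesis by (simp add: mult_ac)
    qed
    finally show ?thesis .
  qed
  define s :: real where "s = 2/3"
  define z where "z = vec D (\<lambda>b. x $ b - complex_of_real s * y $ b)"
  have zz: "vdot z z = vdot x x - complex_of_real s * vdot x y - complex_of_real s * vdot y x
      + complex_of_real (s * s) * vdot y y"
    unfolding z_def vdot_def using x dy
    by (simp add: sum.distrib sum_subtractf sum_distrib_left algebra_simps)
  have xy: "vdot x y = complex_of_real S" using vdot_cnj[of y x] yx x dy by simp
  have "0 \<le> Re (vdot z z)" by (rule vdot_self_nonneg)
  also have "Re (vdot z z) = Re (vdot x x) - 2 * s * S + s * s * Re (vdot y y)"
    unfolding zz xy yx by simp
  finally have "0 \<le> Re (vdot x x) - 2 * s * S + s * s * Re (vdot y y)" .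
  moreover have "s * s * Re (vdot y y) \<le> s * s * (3/2 * S)" using Ryy by (simp add: s_def)
  ultimately have "0 \<le> Re (vdot x x) - 2/3 * S" by (simp add: s_def)
  then show ?thesis unfolding S_def a_def by simp
qed

lemma effmat_effect:
  assumes \<phi>: "\<And>i. i < M \<Longrightarrow> dim_vec (\<phi> i) = D"
    and norm: "\<And>i. i < M \<Longrightarrow> vdot (\<phi> i) (\<phi> i) = 1"
    and off: "\<And>i j. i < M \<Longrightarrow> j < M \<Longrightarrow> i \<noteq> j \<Longrightarrow> cmod (vdot (\<phi> i) (\<phi> j)) \<le> \<eta>"
    and eta: "0 \<le> \<eta>" "real M * \<eta> \<le> 1/2"
  shows "is_effect D (effmat D M \<phi>)"
  unfolding is_effect_def
proof (intro conjI ballI)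
  show "effmat D M \<phi> \<in> carrier_mat D D" by (simp add: effmat_def)
  show "mat_adjoint (effmat D M \<phi>) = effmat D M \<phi>"
    by (rule eq_matI) (auto simp: mat_adjoint_alt effmat_def mult.commute)
  fix x :: "complex vec" assume "x \<in> carrier_vec D"
  then have x: "dim_vec x = D" by simp
  have q: "Re (vdot x (effmat D M \<phi> *\<^sub>v x)) = 2/3 * (\<Sum>i<M. (cmod (vdot (\<phi> i) x))^2)"
    using effmat_quad[where M=M and \<phi>=\<phi>, OF x \<phi>] by (metis Re_complex_of_real)
  show "0 \<le> Re (vdot x (effmat D M \<phi> *\<^sub>v x))"
    unfolding q by (simp add: sum_nonneg)
  show "Re (vdot x (effmat D M \<phi> *\<^sub>v x)) \<le> Re (vdot x x)"
    unfolding q using effmat_bound[where M=M and \<phi>=\<phi>, OF x \<phi> norm off eta] by simp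
qed

fun tpow :: "complex vec \<Rightarrow> nat \<Rightarrow> complex vec" where
  "tpow x 0 = vone"
| "tpow x (Suc k) = vtens x (tpow x k)"

fun ypow :: "nat \<Rightarrow> complex mat \<Rightarrow> nat \<Rightarrow> complex vec" where
  "ypow N U 0 = vone"
| "ypow N U (Suc j) = vtens (ypow N U j) (choi N U)"

lemma dim_tpow[simp]: "dim_vec (tpow x k) = dim_vec x ^ k"
  by (induction k) (auto simp: vone_def)

lemma dim_ypow[simp]: "U \<in> carrier_mat N N \<Longrightarrow> dim_vec (ypow N U j) = (N*N) ^ j"
  by (induction j) (auto simp: vone_def)

lemma vdot_ypow:
  assumes "W \<in> carrier_mat N N" "U \<in> carrier_mat N N"
  shows "vdot (ypow N W j) (ypow N U j) = (vdot (choi N W) (choi N U)) ^ j"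
  by (induction j) (use assms in \<open>auto simp: vdot_vone vdot_vtens\<close>)

lemma vtens_vone_r: "vtens x vone = x"
  by (rule eq_vecI) (auto simp: vtens_def vone_def)

lemma vdot_tpow: "vdot (tpow x k) (tpow x k) = (vdot x x) ^ k"
  by (induction k) (auto simp: vdot_vone vdot_vtens)

definition swapmat :: "nat \<Rightarrow> nat \<Rightarrow> complex mat" where
  "swapmat N t = permmat (N*N*(N*N)^(t-1)) (swp (N*N) ((N*N)^(t-1)))"

lemma state_lemma:
  assumes U: "U \<in> carrier_mat N N" and j: "j \<le> t"
  shows "foldl (\<lambda>\<phi> V. V *\<^sub>v (kron_id (N*(N*N)^(t-1)) U *\<^sub>v \<phi>)) (tpow (phi N) t) (replicate j (swapmat N t))
     = vtens (tpow (phi N) (t-j)) (ypow N U j)"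
  using j
proof (induction j)
  case 0 then show ?case by (simp add: vtens_vone_r)
next
  case (Suc j)
  let ?L = "(N*N)^(t-1)"
  obtain k where k: "t - j = Suc k" using Suc.prems by (metis Suc_diff_Suc Suc_le_lessD)
  have kj1: "k + j = t - 1" using k Suc.prems by arith
  have "t - Suc j = k" using k by arith
  have kj: "(N*N)^k * (N*N)^j = ?L" using kj1 by (simp add: power_add[symmetric])
  have IH: "foldl (\<lambda>\<phi> V. V *\<^sub>v (kron_id (N*?L) U *\<^sub>v \<phi>)) (tpow (phi N) t) (replicate j (swapmat N t))
     = vtens (phi N) (vtens (tpow (phi N) k) (ypow N U j))"
    using Suc vtens_assoc[of "phi N" _ "tpow (phi N) k" _ "ypow N U j"] U k by simp
  have "foldl (\<lambda>\<phi> V. V *\<^sub>v (kron_id (N*?L) U *\<^sub>v \<phi>)) (tpow (phi N) t) (replicate (Suc j) (swapmat N t))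
      = swapmat N t *\<^sub>v (kron_id (N*?L) U *\<^sub>v vtens (phi N) (vtens (tpow (phi N) k) (ypow N U j)))"
  proof -
    have "replicate (Suc j) (swapmat N t) = replicate j (swapmat N t) @ [swapmat N t]"
      by (simp add: replicate_append_same)
    then show ?thesis by (simp only: foldl_append IH) simp
  qed
  also have "\<dots> = swapmat N t *\<^sub>v vtens (choi N U) (vtens (tpow (phi N) k) (ypow N U j))"
    using kron_vtens[OF U, of "phi N" "vtens (tpow (phi N) k) (ypow N U j)" ?L] U kj by (simp add: choi_def)
  also have "\<dots> = vtens (vtens (tpow (phi N) k) (ypow N U j)) (choi N U)"
    unfolding swapmat_def using swap_vtens[of "choi N U" "N*N" "vtens (tpow (phi N) k) (ypow N U j)" ?L] U kj by simp
  also have "\<dots> = vtens (tpow (phi N) (t - Suc j)) (ypow N U (Suc j))"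
    using vtens_assoc[of "tpow (phi N) k" _ "ypow N U j" _ "choi N U"] U k
    by (simp add: \<open>t - Suc j = k\<close>)
  finally show ?case by simp
qed

lemma mtrace_one: "mtrace (1\<^sub>m N) = of_nat N"
  by (simp add: mtrace_def)

lemma unitary_carrier: "unitary_mat N U \<Longrightarrow> U \<in> carrier_mat N N"
  by (simp add: unitary_mat_def)

lemma tr_self: "unitary_mat N U \<Longrightarrow> mtrace (mat_adjoint U * U) = of_nat N"
  by (simp add: unitary_mat_def mtrace_one)

lemma hs_sq:
  assumes U: "unitary_mat N U" and W: "unitary_mat N W" and c: "cmod c = 1"
  shows "Re (mtrace (mat_adjoint (c \<cdot>\<^sub>m U - W) * (c \<cdot>\<^sub>m U - W))) = 2 * real N - 2 * Re (c * mtrace (mat_adjoint W * U))"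
proof -
  have Uc: "U \<in> carrier_mat N N" and Wc: "W \<in> carrier_mat N N" using U W by (auto simp: unitary_mat_def)
  have Ac: "c \<cdot>\<^sub>m U - W \<in> carrier_mat N N" using Uc Wc by auto
  have cc: "cnj c * c = 1" using c by (metis complex_norm_square mult.commute of_real_1 power_one)
  have TUU: "(\<Sum>a<N. \<Sum>b<N. cnj (U $$ (a,b)) * U $$ (a,b)) = of_nat N"
    using tr_self[OF U] mtrace_adj[OF Uc Uc] by simp
  have TWW: "(\<Sum>a<N. \<Sum>b<N. cnj (W $$ (a,b)) * W $$ (a,b)) = of_nat N"
    using tr_self[OF W] mtrace_adj[OF Wc Wc] by simp
  define \<tau> where "\<tau> = mtrace (mat_adjoint W * U)"
  have TWU: "(\<Sum>a<N. \<Sum>b<N. cnj (W $$ (a,b)) * U $$ (a,b)) = \<tau>"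
    using mtrace_adj[OF Wc Uc] by (simp add: \<tau>_def)
  have TUW: "(\<Sum>a<N. \<Sum>b<N. cnj (U $$ (a,b)) * W $$ (a,b)) = cnj \<tau>"
    unfolding TWU[symmetric] by (simp add: mult.commute)
  have "mtrace (mat_adjoint (c \<cdot>\<^sub>m U - W) * (c \<cdot>\<^sub>m U - W)) =
      (\<Sum>a<N. \<Sum>b<N. cnj (c * U $$ (a,b) - W $$ (a,b)) * (c * U $$ (a,b) - W $$ (a,b)))"
    unfolding mtrace_adj[OF Ac Ac] using Uc Wc by (intro sum.cong refl) simp
  also have "\<dots> = (\<Sum>a<N. \<Sum>b<N. (cnj c * c) * (cnj (U $$ (a,b)) * U $$ (a,b)) - cnj c * (cnj (U $$ (a,b)) * W $$ (a,b))
       - c * (cnj (W $$ (a,b)) * U $$ (a,b)) + cnj (W $$ (a,b)) * W $$ (a,b))"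
    by (intro sum.cong refl) (simp add: algebra_simps)
  also have "\<dots> = of_nat N - cnj c * cnj \<tau> - c * \<tau> + of_nat N"
    unfolding cc by (simp add: sum.distrib sum_subtractf sum_distrib_left[symmetric] TUU TWW TWU TUW)
  finally have e: "mtrace (mat_adjoint (c \<cdot>\<^sub>m U - W) * (c \<cdot>\<^sub>m U - W)) = of_nat N - cnj c * cnj \<tau> - c * \<tau> + of_nat N" .
  show ?thesis unfolding e \<tau>_def[symmetric] by simp
qed



lemma cmod_sgn_eq: "(z::complex) = complex_of_real (cmod z) * sgn z"
  by (cases "z = 0") (auto simp: complex_sgn_def scaleR_conv_of_real)

lemma sq_le_sqrt: assumes "(e::real) \<le> sqrt Y" "0 < e" "0 \<le> Y" shows "e^2 \<le> Y"
  using assms by (metis less_imp_le power_mono real_sqrt_pow2)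

lemma tr_nonneg: "A \<in> carrier_mat N N \<Longrightarrow> 0 \<le> Re (mtrace (mat_adjoint A * A))"
  unfolding mtrace_adj[of A N A] by (simp add: Re_sum sum_nonneg)

lemma hs_nonneg: "A \<in> carrier_mat N N \<Longrightarrow> 0 \<le> hs_norm A"
  unfolding hs_norm_def using tr_nonneg by simp

lemma phase_choice: "\<exists>\<theta>\<in>{0..<2*pi}. exp (\<i> * complex_of_real \<theta>) * \<tau> = complex_of_real (cmod \<tau>)"
proof (cases "\<tau> = 0")
  case True then show ?thesis by (intro bexI[of _ 0]) auto
next
  case False
  define a where "a = - Arg \<tau>"
  have A: "sgn \<tau> = cis (Arg \<tau>)" "-pi < Arg \<tau>" "Arg \<tau> \<le> pi" using Arg_correct[OF False] by auto
  have tau: "\<tau> = complex_of_real (cmod \<tau>) * cis (Arg \<tau>)"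
    using A(1) cmod_sgn_eq by metis
  have c1: "cis a * cis (Arg \<tau>) = 1" by (simp add: a_def cis_mult)
  have "cis a * \<tau> = complex_of_real (cmod \<tau>) * (cis a * cis (Arg \<tau>))"
    by (subst tau) (simp only: mult_ac)
  then have ca: "cis a * \<tau> = complex_of_real (cmod \<tau>)" using c1 by simp
  define \<theta> where "\<theta> = (if 0 \<le> a then a else a + 2*pi)"
  have th: "\<theta> \<in> {0..<2*pi}" using A by (auto simp: \<theta>_def a_def)
  have "cis \<theta> = cis a" by (simp add: \<theta>_def cis_mult[symmetric])
  then show ?thesis using th ca by (intro bexI[of _ \<theta>]) (auto simp: cis_conv_exp)
qed

lemma far_bound:
  assumes U: "unitary_mat N U" and W: "unitary_mat N W" and N: "N \<ge> 1"
    and e: "0 < \<epsilon>" and d: "\<epsilon> \<le> phase_dist N U W"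
  shows "cmod (mtrace (mat_adjoint W * U)) / real N \<le> 1 - \<epsilon>^2"
proof -
  define \<tau> where "\<tau> = mtrace (mat_adjoint W * U)"
  obtain \<theta> where th: "\<theta> \<in> {0..<2*pi}" and c\<tau>: "exp (\<i> * complex_of_real \<theta>) * \<tau> = complex_of_real (cmod \<tau>)"
    using phase_choice by blast
  define c where "c = exp (\<i> * complex_of_real \<theta>)"
  have c: "cmod c = 1" by (simp add: c_def)
  define X where "X = 2 * real N - 2 * cmod \<tau>"
  have hs: "hs_norm (c \<cdot>\<^sub>m U - W) = sqrt X"
    unfolding hs_norm_def hs_sq[OF U W c] X_def using c\<tau> by (simp add: c_def \<tau>_def)
  have bdd: "bdd_below ((\<lambda>\<theta>. hs_norm (exp (\<i> * complex_of_real \<theta>) \<cdot>\<^sub>m U - W) / sqrt (2 * real N)) ` {0..<2*pi})"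
  proof (rule bdd_belowI[of _ 0])
    fix y assume "y \<in> (\<lambda>\<theta>. hs_norm (exp (\<i> * complex_of_real \<theta>) \<cdot>\<^sub>m U - W) / sqrt (2 * real N)) ` {0..<2*pi}"
    then obtain \<theta>' where "y = hs_norm (exp (\<i> * complex_of_real \<theta>') \<cdot>\<^sub>m U - W) / sqrt (2 * real N)" by auto
    moreover have "exp (\<i> * complex_of_real \<theta>') \<cdot>\<^sub>m U - W \<in> carrier_mat N N"
      using U W by (auto simp: unitary_mat_def)
    ultimately show "0 \<le> y" using hs_nonneg by simp
  qed
  have "\<epsilon> \<le> hs_norm (c \<cdot>\<^sub>m U - W) / sqrt (2 * real N)"
    using d cINF_lower[OF bdd th] unfolding phase_dist_def c_def by linarith
  then have "\<epsilon> \<le> sqrt (X / (2 * real N))" unfolding hs by (simp add: real_sqrt_divide)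
  moreover have "X / (2 * real N) \<ge> 0"
  proof (rule ccontr)
    assume "\<not> X / (2 * real N) \<ge> 0"
    then have "sqrt (X / (2 * real N)) < 0" by simp
    then show False using e \<open>\<epsilon> \<le> sqrt (X / (2 * real N))\<close> by linarith
  qed
  ultimately have "\<epsilon>^2 \<le> X / (2 * real N)"
    using e sq_le_sqrt by blast
  also have "X / (2 * real N) = 1 - cmod \<tau> / real N" using N by (simp add: X_def field_simps)
  finally show ?thesis unfolding \<tau>_def by simp
qed



lemma choose_t:
  assumes M: "M \<ge> 2" and m: "0 < m" "m \<le> 1"
  shows "\<exists>t::nat. t \<ge> 1 \<and> real t \<le> 4 * ln (real M) / m \<and> (1 - m)^t \<le> 1 / (2 * real M)"
proof -
  define x where "x = ln (2 * real M) / m"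
  define t where "t = nat \<lceil>x\<rceil>"
  have x0: "x > 0" using M m by (simp add: x_def)
  have tx: "real t \<ge> x" "real t < x + 1" using x0 ceiling_correct[of x] by (auto simp: t_def)
  have t1: "t \<ge> 1" using x0 tx(1) by (cases t) auto
  have ln2: "ln (2::real) \<ge> 1/2"
  proof -
    have "ln (1/2::real) \<le> 1/2 - 1" by (rule ln_le_minus_one) simp
    then show ?thesis by (simp add: ln_div)
  qed
  have lnM: "ln (real M) \<ge> ln 2" using M by simp
  have l2M: "ln (2 * real M) = ln 2 + ln (real M)" using M by (simp add: ln_mult)
  have "x \<le> 2 * ln (real M) / m" unfolding x_def l2M using lnM m by (intro divide_right_mono) auto
  moreover have "1 \<le> 2 * ln (real M) / m"
  proof -
    have "m \<le> 2 * ln (real M)" using m lnM ln2 by linarith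
    then show ?thesis using m by simp
  qed
  ultimately have "real t \<le> 4 * ln (real M) / m" using tx by (simp add: add_divide_distrib[symmetric])
  moreover have "(1 - m)^t \<le> 1 / (2 * real M)"
  proof -
    have "(1 - m)^t \<le> (exp (-m))^t"
      using m by (intro power_mono) (auto simp: add_uminus_conv_diff[symmetric] exp_ge_add_one_self simp del: add_uminus_conv_diff)
    also have "\<dots> = exp (- (m * real t))" by (simp add: exp_of_nat_mult[symmetric] mult.commute)
    also have "\<dots> \<le> exp (- ln (2 * real M))"
    proof -
      have "ln (2 * real M) \<le> m * real t" using tx m unfolding x_def by (simp add: field_simps)
      then show ?thesis by simp
    qed
    also have "\<dots> = 1 / (2 * real M)" using M by (simp add: exp_minus inverse_eq_divide)
    finally show ?thesis .
  qed
  ultimately show ?thesis using t1 by blast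
qed

lemma mtrace_smult: "A \<in> carrier_mat n n \<Longrightarrow> mtrace (c \<cdot>\<^sub>m A) = c * mtrace A"
  unfolding mtrace_def sum_distrib_left by (intro sum.cong) auto

lemma tr_cnj:
  assumes "A \<in> carrier_mat N N" "B \<in> carrier_mat N N"
  shows "mtrace (mat_adjoint A * B) = cnj (mtrace (mat_adjoint B * A))"
  unfolding mtrace_adj[OF assms] mtrace_adj[OF assms(2,1)] by (simp add: mult.commute)

lemma vdot_phi: assumes N: "N \<ge> 1" shows "vdot (phi N) (phi N) = 1"
proof -
  let ?s = "complex_of_real (1 / sqrt (real N))"
  have ss: "cnj ?s * ?s = 1 / of_nat N"
  proof -
    have "cnj ?s * ?s = complex_of_real (1 / sqrt (real N) * (1 / sqrt (real N)))"
      by (simp only: of_real_mult complex_cnj_complex_of_real)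
    also have "1 / sqrt (real N) * (1 / sqrt (real N)) = 1 / real N" using N
      by (simp add: real_sqrt_mult[symmetric])
    finally have "cnj ?s * ?s = complex_of_real (1 / real N)" .
    then show ?thesis by (metis of_real_divide of_real_1 of_real_of_nat_eq)
  qed
  have "vdot (phi N) (phi N) = (\<Sum>a<N. \<Sum>c<N. if a = c then cnj ?s * ?s else 0)"
    unfolding vdot_def dim_phi sum_divmod
    by (intro sum.cong refl) (auto simp: phi_def divmod_idx idx_lt)
  also have "\<dots> = of_nat N * (1 / of_nat N)" unfolding ss by simp
  also have "\<dots> = 1" using N by simp
  finally show ?thesis .
qed

theorem theorem4:
  "\<exists>C>0. \<forall>(N::nat) (M::nat) (W::nat \<Rightarrow> complex mat) (\<delta>::real) (\<epsilon>::real).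
     N \<ge> 1 \<longrightarrow> M \<ge> 2 \<longrightarrow>
     (\<forall>i<M. unitary_mat N (W i)) \<longrightarrow>
     card (W ` {..<M}) = M \<longrightarrow>
     Max {cmod (mtrace (mat_adjoint (W i) * W j)) | i j. i < j \<and> j < M} = real N * (1 - \<delta>) \<longrightarrow>
     \<delta> > 0 \<longrightarrow> \<epsilon> > 0 \<longrightarrow>
     (\<exists>q. real q \<le> C * ln (real M) / min (\<epsilon>\<^sup>2) \<delta> \<and> eps_tests N (W ` {..<M}) \<epsilon> q)"
proof (intro exI[of _ "4::real"] conjI allI impI)
  show "(0::real) < 4" by simp
  fix N M :: nat and W :: "nat \<Rightarrow> complex mat" and \<delta> \<epsilon> :: real
  assume N: "N \<ge> 1" and M: "M \<ge> 2" and Wu: "\<forall>i<M. unitary_mat N (W i)"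
    and "card (W ` {..<M}) = M"
    and mx: "Max {cmod (mtrace (mat_adjoint (W i) * W j)) | i j. i < j \<and> j < M} = real N * (1 - \<delta>)"
    and dp: "\<delta> > 0" and ep: "\<epsilon> > 0"
  have Wc: "\<And>i. i < M \<Longrightarrow> W i \<in> carrier_mat N N" using Wu by (simp add: unitary_mat_def)
  define T where "T i j = mtrace (mat_adjoint (W i) * W j)" for i j
  define Sset where "Sset = {cmod (mtrace (mat_adjoint (W i) * W j)) | i j. i < j \<and> j < M}"
  have fin: "finite Sset"
  proof (rule finite_subset)
    show "Sset \<subseteq> (\<lambda>(i,j). cmod (mtrace (mat_adjoint (W i) * W j))) ` ({..<M} \<times> {..<M})"
      unfolding Sset_def by force
  qed simp
  have le_ij: "cmod (T i j) \<le> real N * (1 - \<delta>)" if "i < j" "j < M" for i j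
  proof -
    have "cmod (T i j) \<in> Sset" unfolding Sset_def T_def using that by blast
    then show ?thesis using Max_ge[OF fin] mx unfolding Sset_def by auto
  qed
  have d1: "\<delta> \<le> 1"
  proof -
    have "0 \<le> cmod (T 0 1)" by simp
    also have "\<dots> \<le> real N * (1 - \<delta>)" using le_ij[of 0 1] M by simp
    finally show ?thesis using N by (simp add: zero_le_mult_iff)
  qed
  have offT: "cmod (T i j) \<le> real N * (1 - \<delta>)" if "i < M" "j < M" "i \<noteq> j" for i j
  proof (cases "i < j")
    case True then show ?thesis using le_ij that by simp
  next
    case False
    then have "j < i" using that by simp
    moreover have "T i j = cnj (T j i)" unfolding T_def using tr_cnj Wc that by blast
    ultimately show ?thesis using le_ij[of j i] that by simp
  qed
  define m where "m = min (\<epsilon>\<^sup>2) \<delta>"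
  have m: "0 < m" "m \<le> 1" "m \<le> \<delta>" "m \<le> \<epsilon>^2" using dp ep d1 by (auto simp: m_def)
  obtain t :: nat where t1: "t \<ge> 1" and tq: "real t \<le> 4 * ln (real M) / m"
    and tp: "(1 - m)^t \<le> 1 / (2 * real M)"
    using choose_t[OF M m(1,2)] by blast
  define L where "L = (N*N)^(t-1)"
  define K where "K = N * L"
  define D where "D = N * K"
  define \<psi> where "\<psi> = tpow (phi N) t"
  define V0 where "V0 = (1\<^sub>m D :: complex mat)"
  define Vs where "Vs = replicate t (swapmat N t)"
  define \<phi> where "\<phi> i = ypow N (W i) t" for i
  define E where "E = effmat D M \<phi>"
  have DL: "(N*N)^t = D" using t1 unfolding D_def K_def L_def
    by (cases t) auto
  have Dsw: "N*N*(N*N)^(t-1) = D" unfolding D_def K_def L_def by simp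
  have fs: "final_state U K \<psi> V0 Vs = ypow N U t" if U: "U \<in> carrier_mat N N" for U
  proof -
    have "\<psi> \<in> carrier_vec D" unfolding \<psi>_def by (rule carrier_vecI) (simp only: dim_tpow dim_phi DL)
    then have v0: "V0 *\<^sub>v \<psi> = \<psi>" unfolding V0_def by (rule one_mult_mat_vec)
    have "final_state U K \<psi> V0 Vs = foldl (\<lambda>\<phi> V. V *\<^sub>v (kron_id (N*(N*N)^(t-1)) U *\<^sub>v \<phi>)) (tpow (phi N) t) (replicate t (swapmat N t))"
      unfolding final_state_def v0 unfolding Vs_def K_def L_def \<psi>_def ..
    also have "\<dots> = vtens (tpow (phi N) (t - t)) (ypow N U t)" by (rule state_lemma[OF U order_refl])
    also have "\<dots> = ypow N U t" by (simp add: vtens_vone)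
    finally show ?thesis .
  qed
  have g: "vdot (ypow N A t) (ypow N B t) = (mtrace (mat_adjoint A * B) / of_nat N) ^ t"
    if "A \<in> carrier_mat N N" "B \<in> carrier_mat N N" for A B
    using vdot_ypow[OF that] vdot_choi[OF that N] by simp
  have dimphi: "dim_vec (\<phi> i) = D" if "i < M" for i unfolding \<phi>_def by (simp only: dim_ypow[OF Wc[OF that]] DL)
  have norm: "vdot (\<phi> i) (\<phi> i) = 1" if "i < M" for i
    using g[OF Wc[OF that] Wc[OF that]] tr_self[of N "W i"] Wu that N unfolding \<phi>_def by simp
  define \<eta> where "\<eta> = (1 - \<delta>)^t"
  have off: "cmod (vdot (\<phi> i) (\<phi> j)) \<le> \<eta>" if "i < M" "j < M" "i \<noteq> j" for i j
  proof -
    have "cmod (vdot (\<phi> i) (\<phi> j)) = (cmod (T i j) / real N) ^ t"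
      unfolding \<phi>_def g[OF Wc[OF that(1)] Wc[OF that(2)]] T_def by (simp add: norm_power norm_divide)
    also have "\<dots> \<le> (1 - \<delta>) ^ t"
    proof (rule power_mono)
      show "cmod (T i j) / real N \<le> 1 - \<delta>" using offT[OF that] N by (simp add: divide_le_eq mult.commute)
    qed simp
    finally show ?thesis unfolding \<eta>_def .
  qed
  have eta0: "0 \<le> \<eta>" using d1 by (simp add: \<eta>_def)
  have etaM: "real M * \<eta> \<le> 1/2"
  proof -
    have "\<eta> \<le> (1 - m)^t" unfolding \<eta>_def using m d1 by (intro power_mono) auto
    also have "\<dots> \<le> 1 / (2 * real M)" by (rule tp)
    finally show ?thesis using M by (simp add: field_simps)
  qed
  have eff: "is_effect D E" unfolding E_def by (rule effmat_effect[OF dimphi norm off eta0 etaM])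
  have acc: "accept_prob U K \<psi> V0 Vs E = 2/3 * (\<Sum>i<M. (cmod (vdot (\<phi> i) (ypow N U t)))^2)"
    if U: "U \<in> carrier_mat N N" for U
  proof -
    have dU: "dim_vec (ypow N U t) = D" by (simp only: dim_ypow[OF U] DL)
    show ?thesis unfolding accept_prob_def Let_def fs[OF U] E_def
      using effmat_quad[where M=M and \<phi>=\<phi>, OF dU dimphi] by (metis Re_complex_of_real)
  qed
  have NK: "N * K = D" by (simp add: D_def)
  have valid: "valid_alg N t K \<psi> V0 Vs E"
    unfolding valid_alg_def NK
  proof (intro conjI ballI)
    have "1 \<le> L" unfolding L_def using N one_le_power[of "N*N" "t-1"] by (simp add: Suc_le_eq)
    then show "1 \<le> K" unfolding K_def using N by (metis mult_le_mono nat_mult_1)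
    show "\<psi> \<in> carrier_vec D" unfolding \<psi>_def by (rule carrier_vecI) (simp only: dim_tpow dim_phi DL)
    have pp: "vdot (phi N) (phi N) = 1" by (rule vdot_phi[OF N])
    show "vdot \<psi> \<psi> = 1" unfolding \<psi>_def vdot_tpow pp by simp
    have "mat_adjoint (1\<^sub>m D) = (1\<^sub>m D :: complex mat)"
      by (rule eq_matI) (auto simp: mat_adjoint_alt)
    then show "unitary_mat D V0" unfolding V0_def unitary_mat_def by simp
    show "length Vs = t" by (simp add: Vs_def)
    fix V assume "V \<in> set Vs"
    then have "V = swapmat N t" by (simp add: Vs_def split: if_splits)
    then show "unitary_mat D V"
      unfolding swapmat_def using permmat_unitary[OF swp_bij[of "N*N" "(N*N)^(t-1)"]] Dsw
      by simp
  next
    show "is_effect D E" using eff by simp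
  qed
  show "\<exists>q. real q \<le> 4 * ln (real M) / min (\<epsilon>\<^sup>2) \<delta> \<and> eps_tests N (W ` {..<M}) \<epsilon> q"
  proof (intro exI[of _ t] conjI)
    show "real t \<le> 4 * ln (real M) / min (\<epsilon>\<^sup>2) \<delta>" using tq by (simp add: m_def)
    show "eps_tests N (W ` {..<M}) \<epsilon> t"
      unfolding eps_tests_def
    proof (rule exI[of _ K], rule exI[of _ \<psi>], rule exI[of _ V0], rule exI[of _ Vs], rule exI[of _ E],
        rule conjI[OF valid], intro allI impI conjI)
        fix U assume Uu: "unitary_mat N U"
        then have U: "U \<in> carrier_mat N N" by (simp add: unitary_mat_def)
        assume "has_property (W ` {..<M}) U"
        then obtain \<theta> k where k: "k < M" and Ueq: "U = exp (\<i> * complex_of_real \<theta>) \<cdot>\<^sub>m W k"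
          unfolding has_property_def by blast
        define c where "c = exp (\<i> * complex_of_real \<theta>)"
        have adjc: "mat_adjoint (W k) \<in> carrier_mat N N" using Wc[OF k] by (simp add: mat_adjoint_alt)
        have "mat_adjoint (W k) * U = c \<cdot>\<^sub>m (mat_adjoint (W k) * W k)"
          unfolding Ueq c_def[symmetric] by (rule mult_smult_distrib[OF adjc Wc[OF k]])
        moreover have "mat_adjoint (W k) * W k \<in> carrier_mat N N" using adjc Wc[OF k] by simp
        ultimately have "mtrace (mat_adjoint (W k) * U) = c * mtrace (mat_adjoint (W k) * W k)"
          using mtrace_smult by simp
        also have "mtrace (mat_adjoint (W k) * W k) = of_nat N" using tr_self Wu k by simp
        finally have trc: "mtrace (mat_adjoint (W k) * U) = c * of_nat N" .
        have "cmod (vdot (\<phi> k) (ypow N U t)) = 1"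
          unfolding \<phi>_def g[OF Wc[OF k] U] trc using N by (simp add: norm_power c_def)
        then have "1 \<le> (\<Sum>i<M. (cmod (vdot (\<phi> i) (ypow N U t)))^2)"
          using member_le_sum[of k "{..<M}" "\<lambda>i. (cmod (vdot (\<phi> i) (ypow N U t)))^2"] k by simp
        then show "2/3 \<le> accept_prob U K \<psi> V0 Vs E" unfolding acc[OF U] by simp
      next
        fix U assume Uu: "unitary_mat N U"
        then have U: "U \<in> carrier_mat N N" by (simp add: unitary_mat_def)
        assume far: "eps_far N \<epsilon> (W ` {..<M}) U"
        have each: "(cmod (vdot (\<phi> i) (ypow N U t)))^2 \<le> 1 / (2 * real M)" if i: "i < M" for i
        proof -
          have "\<epsilon> \<le> phase_dist N U (W i)" using far i unfolding eps_far_def by blast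
          then have b: "cmod (mtrace (mat_adjoint (W i) * U)) / real N \<le> 1 - \<epsilon>^2"
            using far_bound[OF Uu _ N ep] Wu i by blast
          have nn: "0 \<le> cmod (mtrace (mat_adjoint (W i) * U)) / real N" by simp
          have "(cmod (vdot (\<phi> i) (ypow N U t)))^2 = ((cmod (mtrace (mat_adjoint (W i) * U)) / real N)^2)^t"
            unfolding \<phi>_def g[OF Wc[OF i] U] by (simp add: norm_power norm_divide power_mult[symmetric] mult.commute)
          also have "\<dots> \<le> ((1 - \<epsilon>^2)^2)^t" using b nn by (intro power_mono) auto
          also have "\<dots> \<le> (1 - m)^t"
          proof (rule power_mono)
            have "0 \<le> 1 - \<epsilon>^2" using b nn by linarith
            moreover have "1 - \<epsilon>^2 \<le> 1" by simp
            ultimately have "(1 - \<epsilon>^2)^2 \<le> 1 - \<epsilon>^2" by (simp add: power2_eq_square mult_left_le)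
            then show "(1 - \<epsilon>^2)^2 \<le> 1 - m" using m by linarith
          qed simp
          also have "\<dots> \<le> 1 / (2 * real M)" by (rule tp)
          finally show ?thesis .
        qed
        have "(\<Sum>i<M. (cmod (vdot (\<phi> i) (ypow N U t)))^2) \<le> (\<Sum>i<M. 1 / (2 * real M))"
          using each by (intro sum_mono) auto
        also have "\<dots> = 1/2" using M by simp
        finally show "accept_prob U K \<psi> V0 Vs E \<le> 1/3" unfolding acc[OF U] by simp
    qed
  qed
qed

end
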